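(* Let $\overline T$ be a subspace of $\overline K^\circ$ and $\tilde q:\widetilde V\to\overline K/\overline T$ a non-trivial generalized $(\sigma,\varepsilon)$-quadratic form with sesquilinearization $\tilde f$, whose singular points span $\mathrm{PG}(\widetilde V)$. Let $U\subseteq\mathrm{Rad}(\tilde f)$ be a subspace with $U\cap\mathrm{Rad}(\tilde q)=\{0\}$, let $q:=\tilde q_U:V:=\widetilde V/U\to\overline K/\overline R$ (with $\overline R:=\overline T_U$) be the quotient form, assumed non-trivial, and let $\overline S$ be any complement of $\overline T$ in the $K$-vector space $\overline R$. Then $\tilde q$ is isomorphic to the cover $q_E^{\overline S,\overline T}$ (for any basis $E$ of $V$ of $q$-singular vectors), i.e. there is a bijective linear map $\alpha:\widetilde V\to V\oplus\overline S$ with $q_E^{\overline S,\overline T}(\alpha(v))=\tilde q(v)$ for all $v\in\widetilde V$.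
   Context: $K$ division ring, $(\sigma,\varepsilon)$ admissible pair ($\sigma$ anti-automorphism, $\varepsilon^\sigma\varepsilon=1$, $t^{\sigma^2}=\varepsilon t\varepsilon^{-1}$). $K_{\sigma,\varepsilon}=\{t-t^\sigma\varepsilon\}$, $K^{\sigma,\varepsilon}=\{t:t=-t^\sigma\varepsilon\}$, $\overline K=K/K_{\sigma,\varepsilon}$, $\bar t$ class of $t$, $\bar t\circ\lambda=\overline{\lambda^\sigma t\lambda}$, $\overline K^\circ=K^{\sigma,\varepsilon}/K_{\sigma,\varepsilon}$ (right $K$-vector space under $\circ$). A generalized $(\sigma,\varepsilon)$-quadratic form with co-defect a $\circ$-stable subgroup $\overline H$: $p:W\to\overline K/\overline H$ ($W$ right $K$-vector space) with $p(w\lambda)=p(w)\circ\lambda$ ($(\bar t+\overline H)\circ\lambda=\bar t\circ\lambda+\overline H$) and trace-valued $(\sigma,\varepsilon)$-sesquilinear $h$ ($h(x\lambda,y\mu)=\lambda^\sigma h(x,y)\mu$, $h(y,x)=h(x,y)^\sigma\varepsilon$, $h(x,x)\in\{t+t^\sigma\varepsilon\}$) with $p(x+y)=p(x)+p(y)+(\overline{h(x,y)}+\overline H)$. Non-trivial: not identically $\overline H$; singular vector: $p(w)=\overline H$. $\mathrm{Rad}(h)=\{x:h(x,W)=0\}$, $\mathrm{Rad}(p)$ its singular vectors. Quotient: $\overline H_U\supseteq\overline H$ is the subspace of $\overline K^\circ$ with $\overline H_U/\overline H=p(U)$ and $p_U(w+U)=\bar t+\overline H_U$ where $\bar t+\overline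 H=p(w)$. Cover: for $q:V\to\overline K/\overline R$ with sesquilinearization $f$, a basis $E=(e_i)_{i\in I}$ of $q$-singular vectors ($I$ totally ordered), $g_E(\sum e_i\lambda_i,\sum e_j\mu_j)=\sum_{i<j}\lambda_i^\sigma f(e_i,e_j)\mu_j$, and $\overline R=\overline S\oplus\overline T$, the form $q_E^{\overline S,\overline T}:V\oplus\overline S\to\overline K/\overline T$ is $q_E^{\overline S,\overline T}(x+\bar r)=\overline{g_E(x,x)}+\bar r+\overline T$. *)

theory Defs
  imports Main
begin

definition anti_aut :: "('k::division_ring \<Rightarrow> 'k) \<Rightarrow> bool" where
  "anti_aut \<sigma> \<longleftrightarrow> bij \<sigma> \<and> (\<forall>a b. \<sigma> (a + b) = \<sigma> a + \<sigma> b) \<and> (\<forall>a b. \<sigma> (a * b) = \<sigma> b * \<sigma> a)"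

definition admissible :: "('k::division_ring \<Rightarrow> 'k) \<Rightarrow> 'k \<Rightarrow> bool" where
  "admissible \<sigma> \<epsilon> \<longleftrightarrow> anti_aut \<sigma> \<and> \<sigma> \<epsilon> * \<epsilon> = 1 \<and> (\<forall>t. \<sigma> (\<sigma> t) = \<epsilon> * t * inverse \<epsilon>)"

definition Ksub :: "('k::division_ring \<Rightarrow> 'k) \<Rightarrow> 'k \<Rightarrow> 'k set" where
  "Ksub \<sigma> \<epsilon> = {t - \<sigma> t * \<epsilon> | t. True}"

definition Kfix :: "('k::division_ring \<Rightarrow> 'k) \<Rightarrow> 'k \<Rightarrow> 'k set" where
  "Kfix \<sigma> \<epsilon> = {t. t = - (\<sigma> t * \<epsilon>)}"

text \<open>A subgroup Hbar of Kbar = K/K_{sigma,eps} is represented by its preimage H in K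
  (a subgroup of K containing K_{sigma,eps}); elements of Kbar/Hbar = K/H are represented
  as cosets t + H (sets).\<close>
definition coset :: "'k::ab_group_add set \<Rightarrow> 'k \<Rightarrow> 'k set" where
  "coset H t = {t + h | h. h \<in> H}"

definition stable_subgroup :: "('k::division_ring \<Rightarrow> 'k) \<Rightarrow> 'k \<Rightarrow> 'k set \<Rightarrow> bool" where
  "stable_subgroup \<sigma> \<epsilon> H \<longleftrightarrow> Ksub \<sigma> \<epsilon> \<subseteq> H \<and> 0 \<in> H \<and> (\<forall>a\<in>H. \<forall>b\<in>H. a - b \<in> H)
     \<and> (\<forall>t\<in>H. \<forall>l. \<sigma> l * t * l \<in> H)"

definition Kcirc_subspace :: "('k::division_ring \<Rightarrow> 'k) \<Rightarrow> 'k \<Rightarrow> 'k set \<Rightarrow> bool" where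
  "Kcirc_subspace \<sigma> \<epsilon> H \<longleftrightarrow> stable_subgroup \<sigma> \<epsilon> H \<and> H \<subseteq> Kfix \<sigma> \<epsilon>"

definition cplus :: "'k::ab_group_add set \<Rightarrow> 'k set \<Rightarrow> 'k set" where
  "cplus C D = {c + d | c d. c \<in> C \<and> d \<in> D}"

definition circK :: "('k::division_ring \<Rightarrow> 'k) \<Rightarrow> 'k \<Rightarrow> 'k set \<Rightarrow> 'k \<Rightarrow> 'k set" where
  "circK \<sigma> \<epsilon> C l = {\<sigma> l * t * l + d | t d. t \<in> C \<and> d \<in> Ksub \<sigma> \<epsilon>}"

definition rvs :: "('v::ab_group_add \<Rightarrow> 'k::division_ring \<Rightarrow> 'v) \<Rightarrow> bool" where
  "rvs sm \<longleftrightarrow> (\<forall>x. sm x 1 = x) \<and> (\<forall>x a b. sm x (a * b) = sm (sm x a) b)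
     \<and> (\<forall>x y a. sm (x + y) a = sm x a + sm y a) \<and> (\<forall>x a b. sm x (a + b) = sm x a + sm x b)"

definition rsubspace :: "('v::ab_group_add \<Rightarrow> 'k::division_ring \<Rightarrow> 'v) \<Rightarrow> 'v set \<Rightarrow> bool" where
  "rsubspace sm U \<longleftrightarrow> 0 \<in> U \<and> (\<forall>x\<in>U. \<forall>y\<in>U. x + y \<in> U) \<and> (\<forall>x\<in>U. \<forall>a. sm x a \<in> U)"

definition rspan :: "('v::ab_group_add \<Rightarrow> 'k::division_ring \<Rightarrow> 'v) \<Rightarrow> 'v set \<Rightarrow> 'v set" where
  "rspan sm A = {v. \<exists>F c. finite F \<and> F \<subseteq> A \<and> v = (\<Sum>a\<in>F. sm a (c a))}"

definition rindep :: "('v::ab_group_add \<Rightarrow> 'k::division_ring \<Rightarrow> 'v) \<Rightarrow> ('i \<Rightarrow> 'v) \<Rightarrow> bool" where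
  "rindep sm E \<longleftrightarrow> (\<forall>F c. finite F \<longrightarrow> (\<Sum>i\<in>F. sm (E i) (c i)) = 0 \<longrightarrow> (\<forall>i\<in>F. c i = 0))"

definition rbasis :: "('v::ab_group_add \<Rightarrow> 'k::division_ring \<Rightarrow> 'v) \<Rightarrow> ('i \<Rightarrow> 'v) \<Rightarrow> bool" where
  "rbasis sm E \<longleftrightarrow> rindep sm E \<and> rspan sm (range E) = UNIV"

definition rlinear :: "('v::ab_group_add \<Rightarrow> 'k::division_ring \<Rightarrow> 'v) \<Rightarrow> ('w::ab_group_add \<Rightarrow> 'k \<Rightarrow> 'w)
    \<Rightarrow> ('v \<Rightarrow> 'w) \<Rightarrow> bool" where
  "rlinear smV smW g \<longleftrightarrow> (\<forall>x y. g (x + y) = g x + g y) \<and> (\<forall>x a. g (smV x a) = smW (g x) a)"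

definition coord :: "('v::ab_group_add \<Rightarrow> 'k::division_ring \<Rightarrow> 'v) \<Rightarrow> ('i \<Rightarrow> 'v) \<Rightarrow> 'v \<Rightarrow> 'i \<Rightarrow> 'k" where
  "coord sm E x = (THE c. finite {i. c i \<noteq> 0} \<and> x = (\<Sum>i\<in>{i. c i \<noteq> 0}. sm (E i) (c i)))"

definition trace_valued_sesq :: "('k::division_ring \<Rightarrow> 'k) \<Rightarrow> 'k \<Rightarrow> ('v::ab_group_add \<Rightarrow> 'k \<Rightarrow> 'v)
    \<Rightarrow> ('v \<Rightarrow> 'v \<Rightarrow> 'k) \<Rightarrow> bool" where
  "trace_valued_sesq \<sigma> \<epsilon> sm h \<longleftrightarrow>
     (\<forall>x y z. h (x + y) z = h x z + h y z) \<and> (\<forall>x y z. h x (y + z) = h x y + h x z)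
   \<and> (\<forall>x y a b. h (sm x a) (sm y b) = \<sigma> a * h x y * b)
   \<and> (\<forall>x y. h y x = \<sigma> (h x y) * \<epsilon>)
   \<and> (\<forall>x. \<exists>t. h x x = t + \<sigma> t * \<epsilon>)"

definition gen_qf :: "('k::division_ring \<Rightarrow> 'k) \<Rightarrow> 'k \<Rightarrow> ('v::ab_group_add \<Rightarrow> 'k \<Rightarrow> 'v) \<Rightarrow> 'k set
    \<Rightarrow> ('v \<Rightarrow> 'k set) \<Rightarrow> ('v \<Rightarrow> 'v \<Rightarrow> 'k) \<Rightarrow> bool" where
  "gen_qf \<sigma> \<epsilon> sm H p h \<longleftrightarrow> stable_subgroup \<sigma> \<epsilon> H
   \<and> (\<forall>w. \<exists>t. p w = coset H t)
   \<and> (\<forall>w l t. p w = coset H t \<longrightarrow> p (sm w l) = coset H (\<sigma> l * t * l))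
   \<and> trace_valued_sesq \<sigma> \<epsilon> sm h
   \<and> (\<forall>x y t s. p x = coset H t \<longrightarrow> p y = coset H s \<longrightarrow> p (x + y) = coset H (t + s + h x y))"

definition nontrivial_qf :: "'k::ab_group_add set \<Rightarrow> ('v \<Rightarrow> 'k set) \<Rightarrow> bool" where
  "nontrivial_qf H p \<longleftrightarrow> (\<exists>w. p w \<noteq> H)"

definition singular :: "'k::ab_group_add set \<Rightarrow> ('v \<Rightarrow> 'k set) \<Rightarrow> 'v \<Rightarrow> bool" where
  "singular H p w \<longleftrightarrow> p w = H"

definition Rad_sesq :: "('v \<Rightarrow> 'v \<Rightarrow> 'k::zero) \<Rightarrow> 'v set" where
  "Rad_sesq h = {x. \<forall>y. h x y = 0}"

definition Rad_qf :: "'k::ab_group_add set \<Rightarrow> ('v \<Rightarrow> 'k set) \<Rightarrow> ('v \<Rightarrow> 'v \<Rightarrow> 'k) \<Rightarrow> 'v set" where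
  "Rad_qf H p h = {x \<in> Rad_sesq h. singular H p x}"

text \<open>Hbar_U: preimage in K of the subgroup with Hbar_U/Hbar = p(U)\<close>
definition quot_codefect :: "'k::ab_group_add set \<Rightarrow> ('v \<Rightarrow> 'k set) \<Rightarrow> 'v set \<Rightarrow> 'k set" where
  "quot_codefect H p U = \<Union> (p ` U)"

definition gE :: "('k::division_ring \<Rightarrow> 'k) \<Rightarrow> ('v::ab_group_add \<Rightarrow> 'k \<Rightarrow> 'v) \<Rightarrow> ('i::linorder \<Rightarrow> 'v)
    \<Rightarrow> ('v \<Rightarrow> 'v \<Rightarrow> 'k) \<Rightarrow> 'v \<Rightarrow> 'v \<Rightarrow> 'k" where
  "gE \<sigma> sm E f x y = (let a = coord sm E x; b = coord sm E y in
     (\<Sum>(i, j) \<in> {(i, j). i < j \<and> a i \<noteq> 0 \<and> b j \<noteq> 0}. \<sigma> (a i) * f (E i) (E j) * b j))"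

text \<open>The cover q_E^{S,T} on V (+) Sbar, where an element of Sbar is a coset of K_{sigma,eps}:
  q(x + rbar) = gE(x,x) + rbar + Tbar (a coset of T).\<close>
definition cover :: "('k::division_ring \<Rightarrow> 'k) \<Rightarrow> ('v::ab_group_add \<Rightarrow> 'k \<Rightarrow> 'v) \<Rightarrow> ('i::linorder \<Rightarrow> 'v)
    \<Rightarrow> ('v \<Rightarrow> 'v \<Rightarrow> 'k) \<Rightarrow> 'k set \<Rightarrow> 'v \<times> 'k set \<Rightarrow> 'k set" where
  "cover \<sigma> sm E f T xr = {gE \<sigma> sm E f (fst xr) (fst xr) + r + t | r t. r \<in> snd xr \<and> t \<in> T}"

end

theory Submission
  imports Defs
begin


section \<open>Scalar multiplication basics\<close>

lemma rvs_zero_sc: "rvs sm \<Longrightarrow> sm x 0 = 0"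
proof -
  assume r: "rvs sm"
  have "sm x (0+0) = sm x 0 + sm x 0" using r unfolding rvs_def by blast
  thus ?thesis by simp
qed

lemma rvs_zero_vec: "rvs sm \<Longrightarrow> sm 0 a = 0"
proof -
  assume r: "rvs sm"
  have "sm (0+0) a = sm 0 a + sm 0 a" using r unfolding rvs_def by blast
  thus ?thesis by simp
qed

lemma rvs_add_sc: "rvs sm \<Longrightarrow> sm x (a + b) = sm x a + sm x b"
  unfolding rvs_def by blast
lemma rvs_add_vec: "rvs sm \<Longrightarrow> sm (x + y) a = sm x a + sm y a"
  unfolding rvs_def by blast
lemma rvs_mult: "rvs sm \<Longrightarrow> sm x (a * b) = sm (sm x a) b"
  unfolding rvs_def by blast
lemma rvs_one: "rvs sm \<Longrightarrow> sm x 1 = x"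
  unfolding rvs_def by blast

lemma rvs_diff_sc: "rvs sm \<Longrightarrow> sm x (a - b) = sm x a - sm x b"
proof -
  assume r: "rvs sm"
  have "sm x a = sm x ((a - b) + b)" by simp
  also have "\<dots> = sm x (a - b) + sm x b" using rvs_add_sc[OF r] .
  finally show ?thesis by (simp add: algebra_simps)
qed

lemma rvs_diff_vec: "rvs sm \<Longrightarrow> sm (x - y) a = sm x a - sm y a"
proof -
  assume r: "rvs sm"
  have "sm x a = sm ((x - y) + y) a" by simp
  also have "\<dots> = sm (x - y) a + sm y a" using rvs_add_vec[OF r] .
  finally show ?thesis by (simp add: algebra_simps)
qed

lemma rvs_sum_vec: "rvs sm \<Longrightarrow> sm (\<Sum>i\<in>F. g i) a = (\<Sum>i\<in>F. sm (g i) a)"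
proof (induction F rule: infinite_finite_induct)
  case (infinite A) thus ?case by (simp add: rvs_zero_vec)
next
  case empty thus ?case by (simp add: rvs_zero_vec)
next
  case (insert x F) thus ?case by (simp add: rvs_add_vec)
qed

lemma sum_supp_superset:
  assumes "finite F" "{i. c i \<noteq> 0} \<subseteq> F" "\<And>i. h i 0 = (0::'a::comm_monoid_add)"
  shows "(\<Sum>i\<in>F. h i (c i)) = (\<Sum>i\<in>{i. c i \<noteq> 0}. h i (c i))"
  by (rule sum.mono_neutral_right) (use assms in auto)

lemma sum_supp_superset_sm:
  assumes "rvs sm" "finite F" "{i. c i \<noteq> 0} \<subseteq> F"
  shows "(\<Sum>i\<in>F. sm (E i) (c i)) = (\<Sum>i\<in>{i. c i \<noteq> 0}. sm (E i) (c i))"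
  by (rule sum.mono_neutral_right) (use assms in \<open>auto simp: rvs_zero_sc\<close>)

lemma rlin_add: "rlinear s1 s2 g \<Longrightarrow> g (x + y) = g x + g y" unfolding rlinear_def by blast
lemma rlin_sm: "rlinear s1 s2 g \<Longrightarrow> g (s1 x a) = s2 (g x) a" unfolding rlinear_def by blast
lemma rlin_zero: "rlinear s1 s2 g \<Longrightarrow> g 0 = 0"
proof -
  assume r: "rlinear s1 s2 g"
  have "g (0+0) = g 0 + g 0" using rlin_add[OF r] .
  thus ?thesis by simp
qed
lemma rlin_diff: "rlinear s1 s2 g \<Longrightarrow> g (x - y) = g x - g y"
proof -
  assume r: "rlinear s1 s2 g"
  have "g x = g ((x - y) + y)" by simp
  also have "\<dots> = g (x - y) + g y" using rlin_add[OF r] .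
  finally show ?thesis by (simp add: algebra_simps)
qed
lemma rlin_sum: "rlinear s1 s2 g \<Longrightarrow> g (\<Sum>i\<in>F. h i) = (\<Sum>i\<in>F. g (h i))"
proof (induction F rule: infinite_finite_induct)
  case (infinite A) thus ?case by (simp add: rlin_zero)
next
  case empty thus ?case by (simp add: rlin_zero)
next
  case (insert x F) thus ?case by (simp add: rlin_add)
qed

section \<open>Coordinates\<close>

lemma rbasis_coord_ex:
  assumes r: "rvs sm" and b: "rbasis sm E"
  shows "\<exists>c. finite {i. c i \<noteq> 0} \<and> x = (\<Sum>i\<in>{i. c i \<noteq> 0}. sm (E i) (c i))"
proof -
  have inj: "inj E"
  proof (rule injI)
    fix i j assume eq: "E i = E j"
    show "i = j"
    proof (rule ccontr)
      assume ne: "i \<noteq> j"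
      let ?c = "\<lambda>k. if k = i then (1::'b) else -1"
      have "(\<Sum>k\<in>{i,j}. sm (E k) (?c k)) = sm (E i) 1 + sm (E j) (-1)"
        using ne by simp
      also have "\<dots> = 0"
      proof -
        have "sm (E j) (0 - 1) = sm (E j) 0 - sm (E j) 1" by (rule rvs_diff_sc[OF r])
        hence "sm (E j) (-1) = - sm (E j) 1" using rvs_zero_sc[OF r, of "E j"] by simp
        thus ?thesis using eq by simp
      qed
      finally have "(\<Sum>k\<in>{i,j}. sm (E k) (?c k)) = 0" .
      moreover have "rindep sm E" using b unfolding rbasis_def by blast
      ultimately have "\<forall>k\<in>{i,j}. ?c k = 0" unfolding rindep_def
        by (elim allE[of _ "{i,j}"] allE[of _ ?c]) simp
      thus False by simp
    qed
  qed
  have "x \<in> rspan sm (range E)" using b unfolding rbasis_def by simp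
  then obtain F c where F: "finite F" "F \<subseteq> range E" and x: "x = (\<Sum>a\<in>F. sm a (c a))"
    unfolding rspan_def by blast
  define d where "d i = (if E i \<in> F then c (E i) else 0)" for i
  have fin: "finite (E -` F)" using F(1) inj by (simp add: finite_vimageI)
  have supp: "{i. d i \<noteq> 0} \<subseteq> E -` F" unfolding d_def by auto
  have img: "E ` (E -` F) = F" using F(2) by auto
  have "x = (\<Sum>i\<in>E -` F. sm (E i) (c (E i)))"
  proof -
    have "(\<Sum>a\<in>E ` (E -` F). sm a (c a)) = (\<Sum>i\<in>E -` F. sm (E i) (c (E i)))"
      by (rule sum.reindex_cong[where l=E]) (use inj in \<open>auto intro: inj_on_subset\<close>)
    thus ?thesis unfolding x img .
  qed
  also have "\<dots> = (\<Sum>i\<in>E -` F. sm (E i) (d i))" unfolding d_def by (rule sum.cong) auto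
  also have "\<dots> = (\<Sum>i\<in>{i. d i \<noteq> 0}. sm (E i) (d i))"
    by (rule sum_supp_superset[OF fin supp]) (simp add: rvs_zero_sc[OF r])
  finally have "x = (\<Sum>i\<in>{i. d i \<noteq> 0}. sm (E i) (d i))" .
  moreover have "finite {i. d i \<noteq> 0}" using finite_subset[OF supp fin] .
  ultimately show ?thesis by blast
qed

lemma rbasis_coord_uniq:
  assumes r: "rvs sm" and b: "rbasis sm E"
    and fc: "finite {i. c i \<noteq> 0}" and fd: "finite {i. d i \<noteq> 0}"
    and eq: "(\<Sum>i\<in>{i. c i \<noteq> 0}. sm (E i) (c i)) = (\<Sum>i\<in>{i. d i \<noteq> 0}. sm (E i) (d i))"
  shows "c = d"
proof -
  let ?F = "{i. c i \<noteq> 0} \<union> {i. d i \<noteq> 0}"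
  have fF: "finite ?F" using fc fd by simp
  have z: "\<And>i. sm (E i) 0 = 0" by (simp add: rvs_zero_sc[OF r])
  have "(\<Sum>i\<in>?F. sm (E i) (c i - d i)) = (\<Sum>i\<in>?F. sm (E i) (c i)) - (\<Sum>i\<in>?F. sm (E i) (d i))"
    by (simp add: rvs_diff_sc[OF r] sum_subtractf)
  also have "\<dots> = 0"
    using sum_supp_superset_sm[OF r fF, of c E] sum_supp_superset_sm[OF r fF, of d E] eq by auto
  finally have s0: "(\<Sum>i\<in>?F. sm (E i) (c i - d i)) = 0" .
  have ri: "rindep sm E" using b unfolding rbasis_def by blast
  have all: "\<And>i. i \<in> ?F \<Longrightarrow> c i - d i = 0"
    using ri[unfolded rindep_def, rule_format, OF fF s0] .
  show ?thesis
  proof (rule ext)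
    fix i show "c i = d i"
    proof (cases "i \<in> ?F")
      case True thus ?thesis using all by simp
    next
      case False thus ?thesis by simp
    qed
  qed
qed

lemma coord_spec:
  assumes r: "rvs sm" and b: "rbasis sm E"
  shows "finite {i. coord sm E x i \<noteq> 0} \<and> x = (\<Sum>i\<in>{i. coord sm E x i \<noteq> 0}. sm (E i) (coord sm E x i))"
proof -
  let ?P = "\<lambda>c. finite {i. c i \<noteq> 0} \<and> x = (\<Sum>i\<in>{i. c i \<noteq> 0}. sm (E i) (c i))"
  have "\<exists>!c. ?P c"
  proof (rule ex_ex1I)
    show "\<exists>c. ?P c" by (rule rbasis_coord_ex[OF r b])
  next
    fix c d assume "?P c" "?P d"
    thus "c = d" using rbasis_coord_uniq[OF r b, of c d] by simp
  qed
  from theI'[OF this] show ?thesis unfolding coord_def .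
qed

lemma coord_fin:
  assumes r: "rvs sm" and b: "rbasis sm E"
  shows "finite {i. coord sm E x i \<noteq> 0}"
  using coord_spec[OF r b, of x] by (rule conjunct1)

lemma coord_sum:
  assumes r: "rvs sm" and b: "rbasis sm E"
  shows "(\<Sum>i\<in>{i. coord sm E x i \<noteq> 0}. sm (E i) (coord sm E x i)) = x"
  using coord_spec[OF r b, of x] by (metis (no_types))

lemma coord_eq:
  assumes r: "rvs sm" and b: "rbasis sm E"
    and fc: "finite {i. c i \<noteq> 0}" and x: "(\<Sum>i\<in>{i. c i \<noteq> 0}. sm (E i) (c i)) = x"
  shows "coord sm E x = c"
  by (rule rbasis_coord_uniq[OF r b coord_fin[OF r b] fc]) (simp only: coord_sum[OF r b] x)

lemma coord_add:
  assumes r: "rvs sm" and b: "rbasis sm E"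
  shows "coord sm E (x + y) = (\<lambda>i. coord sm E x i + coord sm E y i)"
proof -
  let ?c = "coord sm E x" and ?d = "coord sm E y"
  let ?F = "{i. ?c i \<noteq> 0} \<union> {i. ?d i \<noteq> 0}"
  have fF: "finite ?F" using coord_fin[OF r b] by simp
  have sub: "{i. ?c i + ?d i \<noteq> 0} \<subseteq> ?F" by auto
  have "(\<Sum>i\<in>{i. ?c i + ?d i \<noteq> 0}. sm (E i) (?c i + ?d i)) = (\<Sum>i\<in>?F. sm (E i) (?c i + ?d i))"
    using sum_supp_superset_sm[OF r fF sub] by simp
  also have "\<dots> = (\<Sum>i\<in>?F. sm (E i) (?c i)) + (\<Sum>i\<in>?F. sm (E i) (?d i))"
    by (simp add: rvs_add_sc[OF r] sum.distrib)
  also have "\<dots> = x + y"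
    using sum_supp_superset_sm[OF r fF, of ?c E] sum_supp_superset_sm[OF r fF, of ?d E]
      coord_sum[OF r b, of x] coord_sum[OF r b, of y] by simp
  finally show ?thesis
    by (intro coord_eq[OF r b]) (use finite_subset[OF sub fF] in auto)
qed

lemma coord_sm:
  assumes r: "rvs sm" and b: "rbasis sm E"
  shows "coord sm E (sm x l) = (\<lambda>i. coord sm E x i * l)"
proof -
  let ?c = "coord sm E x"
  let ?F = "{i. ?c i \<noteq> 0}"
  have fF: "finite ?F" using coord_fin[OF r b] by simp
  have sub: "{i. ?c i * l \<noteq> 0} \<subseteq> ?F" by auto
  have "(\<Sum>i\<in>{i. ?c i * l \<noteq> 0}. sm (E i) (?c i * l)) = (\<Sum>i\<in>?F. sm (E i) (?c i * l))"
    using sum_supp_superset_sm[OF r fF sub] by simp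
  also have "\<dots> = sm (\<Sum>i\<in>?F. sm (E i) (?c i)) l"
    by (simp add: rvs_mult[OF r] rvs_sum_vec[OF r])
  also have "\<dots> = sm x l" using coord_sum[OF r b, of x] by simp
  finally show ?thesis
    by (intro coord_eq[OF r b]) (use finite_subset[OF sub fF] in auto)
qed


section \<open>Subgroups and cosets\<close>

definition sg :: "'a::ab_group_add set \<Rightarrow> bool" where
  "sg H \<longleftrightarrow> 0 \<in> H \<and> (\<forall>a\<in>H. \<forall>b\<in>H. a - b \<in> H)"

lemma sg_0: "sg H \<Longrightarrow> 0 \<in> H" unfolding sg_def by blast
lemma sg_diff: "sg H \<Longrightarrow> a \<in> H \<Longrightarrow> b \<in> H \<Longrightarrow> a - b \<in> H" unfolding sg_def by blast
lemma sg_neg: "sg H \<Longrightarrow> a \<in> H \<Longrightarrow> - a \<in> H"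
  using sg_diff[of H 0 a] sg_0[of H] by simp
lemma sg_add: "sg H \<Longrightarrow> a \<in> H \<Longrightarrow> b \<in> H \<Longrightarrow> a + b \<in> H"
  using sg_diff[of H a "- b"] sg_neg[of H b] by simp

lemma stable_sg: "stable_subgroup \<sigma> \<epsilon> H \<Longrightarrow> sg H"
  unfolding stable_subgroup_def sg_def by blast
lemma stable_Ksub: "stable_subgroup \<sigma> \<epsilon> H \<Longrightarrow> Ksub \<sigma> \<epsilon> \<subseteq> H"
  unfolding stable_subgroup_def by blast
lemma stable_mult: "stable_subgroup \<sigma> \<epsilon> H \<Longrightarrow> t \<in> H \<Longrightarrow> \<sigma> l * t * l \<in> H"
  unfolding stable_subgroup_def by blast

lemma mem_coset: "sg H \<Longrightarrow> x \<in> coset H a \<longleftrightarrow> x - a \<in> H"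
  unfolding coset_def by (auto simp: algebra_simps) (metis add.commute diff_add_cancel)

lemma coset_eq_iff: "sg H \<Longrightarrow> coset H a = coset H b \<longleftrightarrow> a - b \<in> H"
proof
  assume h: "sg H" and e: "coset H a = coset H b"
  have "a \<in> coset H a" using mem_coset[OF h] sg_0[OF h] by simp
  thus "a - b \<in> H" using e mem_coset[OF h] by simp
next
  assume h: "sg H" and d: "a - b \<in> H"
  show "coset H a = coset H b"
  proof (rule set_eqI)
    fix x
    have "x - a \<in> H \<longleftrightarrow> x - b \<in> H"
    proof
      assume "x - a \<in> H" thus "x - b \<in> H" using sg_add[OF h _ d] by (metis diff_add_cancel add_diff_eq diff_diff_eq2)
    next
      assume "x - b \<in> H" thus "x - a \<in> H" using sg_diff[OF h _ d] by (metis diff_diff_eq2 add_diff_eq diff_add_cancel)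
    qed
    thus "x \<in> coset H a \<longleftrightarrow> x \<in> coset H b" using mem_coset[OF h] by simp
  qed
qed

lemma coset_self: "sg H \<Longrightarrow> a \<in> coset H a"
  using mem_coset[of H a a] sg_0[of H] by simp

lemma coset_is_H: "sg H \<Longrightarrow> coset H a = H \<longleftrightarrow> a \<in> H"
proof -
  assume h: "sg H"
  have "coset H 0 = H" using mem_coset[OF h] by auto
  thus ?thesis using coset_eq_iff[OF h, of a 0] by simp
qed

section \<open>Anti-automorphisms\<close>

lemma aa_add: "anti_aut \<sigma> \<Longrightarrow> \<sigma> (a + b) = \<sigma> a + \<sigma> b" unfolding anti_aut_def by blast
lemma aa_mult: "anti_aut \<sigma> \<Longrightarrow> \<sigma> (a * b) = \<sigma> b * \<sigma> a" unfolding anti_aut_def by blast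
lemma aa_zero: "anti_aut \<sigma> \<Longrightarrow> \<sigma> 0 = 0"
  using aa_add[of \<sigma> 0 0] by simp
lemma aa_neg: "anti_aut \<sigma> \<Longrightarrow> \<sigma> (- a) = - \<sigma> a"
  using aa_add[of \<sigma> a "-a"] aa_zero[of \<sigma>] by (simp add: eq_neg_iff_add_eq_0 add.commute)
lemma aa_diff: "anti_aut \<sigma> \<Longrightarrow> \<sigma> (a - b) = \<sigma> a - \<sigma> b"
  using aa_add[of \<sigma> a "-b"] aa_neg[of \<sigma> b] by simp

lemma adm_aa: "admissible \<sigma> \<epsilon> \<Longrightarrow> anti_aut \<sigma>" unfolding admissible_def by blast

lemma adm_eps_nz: "admissible \<sigma> \<epsilon> \<Longrightarrow> \<epsilon> \<noteq> 0"
  unfolding admissible_def by auto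

lemma Ksub_mem: "k \<in> Ksub \<sigma> \<epsilon> \<longleftrightarrow> (\<exists>t. k = t - \<sigma> t * \<epsilon>)"
  unfolding Ksub_def by blast

lemma Ksub_sg: assumes a: "admissible \<sigma> \<epsilon>" shows "sg (Ksub \<sigma> \<epsilon>)"
proof -
  have aa: "anti_aut \<sigma>" using adm_aa[OF a] .
  have "0 \<in> Ksub \<sigma> \<epsilon>" unfolding Ksub_mem by (rule exI[of _ 0]) (simp add: aa_zero[OF aa])
  moreover have "\<forall>x\<in>Ksub \<sigma> \<epsilon>. \<forall>y\<in>Ksub \<sigma> \<epsilon>. x - y \<in> Ksub \<sigma> \<epsilon>"
  proof (intro ballI)
    fix x y assume "x \<in> Ksub \<sigma> \<epsilon>" "y \<in> Ksub \<sigma> \<epsilon>"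
    then obtain s t where "x = s - \<sigma> s * \<epsilon>" "y = t - \<sigma> t * \<epsilon>" unfolding Ksub_mem by blast
    hence "x - y = (s - t) - \<sigma> (s - t) * \<epsilon>" by (simp add: aa_diff[OF aa] algebra_simps)
    thus "x - y \<in> Ksub \<sigma> \<epsilon>" unfolding Ksub_mem by blast
  qed
  ultimately show ?thesis unfolding sg_def by blast
qed

lemma Ksub_conj: assumes a: "admissible \<sigma> \<epsilon>" and k: "k \<in> Ksub \<sigma> \<epsilon>"
  shows "\<sigma> l * k * l \<in> Ksub \<sigma> \<epsilon>"
proof -
  have aa: "anti_aut \<sigma>" using adm_aa[OF a] .
  have ss: "\<And>t. \<sigma> (\<sigma> t) = \<epsilon> * t * inverse \<epsilon>" using a unfolding admissible_def by blast
  have en: "\<epsilon> \<noteq> 0" using adm_eps_nz[OF a] .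
  obtain t where t: "k = t - \<sigma> t * \<epsilon>" using k unfolding Ksub_mem by blast
  let ?t = "\<sigma> l * t * l"
  have "\<sigma> ?t = \<sigma> l * \<sigma> t * \<sigma> (\<sigma> l)" by (simp add: aa_mult[OF aa] mult.assoc)
  also have "\<dots> = \<sigma> l * \<sigma> t * (\<epsilon> * l * inverse \<epsilon>)" using ss by simp
  finally have "\<sigma> ?t * \<epsilon> = \<sigma> l * \<sigma> t * \<epsilon> * l"
    using en by (simp add: mult.assoc)
  hence "\<sigma> l * k * l = ?t - \<sigma> ?t * \<epsilon>" unfolding t by (simp add: algebra_simps)
  thus ?thesis unfolding Ksub_mem by blast
qed

lemma cplus_coset: assumes h: "sg K"
  shows "cplus (coset K a) (coset K b) = coset K (a + b)"
proof (rule set_eqI)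
  fix x
  show "x \<in> cplus (coset K a) (coset K b) \<longleftrightarrow> x \<in> coset K (a + b)"
  proof
    assume "x \<in> cplus (coset K a) (coset K b)"
    then obtain c d where "x = c + d" "c - a \<in> K" "d - b \<in> K"
      unfolding cplus_def mem_coset[OF h] by blast
    moreover have "x - (a + b) = (c - a) + (d - b)" using \<open>x = c + d\<close> by (simp add: algebra_simps)
    ultimately have "x - (a + b) \<in> K" using sg_add[OF h] by metis
    thus "x \<in> coset K (a + b)" unfolding mem_coset[OF h] by simp
  next
    assume "x \<in> coset K (a + b)"
    hence "x - a \<in> coset K b" using mem_coset[OF h] by (simp add: algebra_simps)
    moreover have "a \<in> coset K a" using coset_self[OF h] .
    moreover have "x = a + (x - a)" by simp
    ultimately show "x \<in> cplus (coset K a) (coset K b)" unfolding cplus_def by blast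
  qed
qed

lemma circK_coset: assumes a: "admissible \<sigma> \<epsilon>"
  shows "circK \<sigma> \<epsilon> (coset (Ksub \<sigma> \<epsilon>) s) l = coset (Ksub \<sigma> \<epsilon>) (\<sigma> l * s * l)"
proof (rule set_eqI)
  fix x
  have h: "sg (Ksub \<sigma> \<epsilon>)" using Ksub_sg[OF a] .
  show "x \<in> circK \<sigma> \<epsilon> (coset (Ksub \<sigma> \<epsilon>) s) l \<longleftrightarrow> x \<in> coset (Ksub \<sigma> \<epsilon>) (\<sigma> l * s * l)"
  proof
    assume "x \<in> circK \<sigma> \<epsilon> (coset (Ksub \<sigma> \<epsilon>) s) l"
    then obtain t d where x: "x = \<sigma> l * t * l + d" and t: "t - s \<in> Ksub \<sigma> \<epsilon>" and d: "d \<in> Ksub \<sigma> \<epsilon>"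
      unfolding circK_def mem_coset[OF h] by blast
    have "x - \<sigma> l * s * l = \<sigma> l * (t - s) * l + d" unfolding x by (simp add: algebra_simps)
    moreover have "\<sigma> l * (t - s) * l + d \<in> Ksub \<sigma> \<epsilon>" using sg_add[OF h Ksub_conj[OF a t] d] .
    ultimately show "x \<in> coset (Ksub \<sigma> \<epsilon>) (\<sigma> l * s * l)" unfolding mem_coset[OF h] by simp
  next
    assume "x \<in> coset (Ksub \<sigma> \<epsilon>) (\<sigma> l * s * l)"
    hence d: "x - \<sigma> l * s * l \<in> Ksub \<sigma> \<epsilon>" unfolding mem_coset[OF h] .
    have "s \<in> coset (Ksub \<sigma> \<epsilon>) s" using coset_self[OF h] .
    moreover have "x = \<sigma> l * s * l + (x - \<sigma> l * s * l)" by simp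
    ultimately show "x \<in> circK \<sigma> \<epsilon> (coset (Ksub \<sigma> \<epsilon>) s) l" unfolding circK_def using d by blast
  qed
qed

lemma cover_coset: assumes hT: "sg T" and hK: "sg K" and KT: "K \<subseteq> T"
  shows "{g + r + t | r t. r \<in> coset K s \<and> t \<in> T} = coset T (g + s)"
proof (rule set_eqI)
  fix x
  show "x \<in> {g + r + t | r t. r \<in> coset K s \<and> t \<in> T} \<longleftrightarrow> x \<in> coset T (g + s)"
  proof
    assume "x \<in> {g + r + t | r t. r \<in> coset K s \<and> t \<in> T}"
    then obtain r t where x: "x = g + r + t" and r: "r - s \<in> K" and t: "t \<in> T"
      unfolding mem_coset[OF hK] by blast
    have "x - (g + s) = (r - s) + t" unfolding x by (simp add: algebra_simps)
    moreover have "(r - s) + t \<in> T" using sg_add[OF hT _ t] r KT by auto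
    ultimately show "x \<in> coset T (g + s)" unfolding mem_coset[OF hT] by metis
  next
    assume "x \<in> coset T (g + s)"
    hence t: "x - (g + s) \<in> T" unfolding mem_coset[OF hT] .
    have "s \<in> coset K s" using coset_self[OF hK] .
    moreover have "x = g + s + (x - (g + s))" by simp
    ultimately show "x \<in> {g + r + t | r t. r \<in> coset K s \<and> t \<in> T}" using t by blast
  qed
qed


locale thm18 =
  fixes \<sigma> :: "'k::division_ring \<Rightarrow> 'k" and \<epsilon> :: 'k
    and smt :: "'v::ab_group_add \<Rightarrow> 'k \<Rightarrow> 'v"
    and T :: "'k set" and qt :: "'v \<Rightarrow> 'k set" and ft :: "'v \<Rightarrow> 'v \<Rightarrow> 'k"
    and U :: "'v set"
    and sm :: "'w::ab_group_add \<Rightarrow> 'k \<Rightarrow> 'w" and \<pi> :: "'v \<Rightarrow> 'w"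
    and q :: "'w \<Rightarrow> 'k set" and f :: "'w \<Rightarrow> 'w \<Rightarrow> 'k"
    and S :: "'k set" and E :: "'i::linorder \<Rightarrow> 'w"
  assumes adm: "admissible \<sigma> \<epsilon>"
    and vs_t: "rvs smt"
    and T_sub: "Kcirc_subspace \<sigma> \<epsilon> T"
    and qt_form: "gen_qf \<sigma> \<epsilon> smt T qt ft"
    and U_sub: "rsubspace smt U"
    and U_rad: "U \<subseteq> Rad_sesq ft"
    and U_meet: "U \<inter> Rad_qf T qt ft = {0}"
    and vs: "rvs sm"
    and \<pi>_lin: "rlinear smt sm \<pi>"
    and \<pi>_surj: "surj \<pi>"
    and \<pi>_ker: "{x. \<pi> x = 0} = U"
    and qdef: "\<And>w t. qt w = coset T t \<Longrightarrow> q (\<pi> w) = coset (quot_codefect T qt U) t"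
    and fdef: "\<And>x y. f (\<pi> x) (\<pi> y) = ft x y"
    and S_sub: "Kcirc_subspace \<sigma> \<epsilon> S"
    and S_cap: "S \<inter> T = Ksub \<sigma> \<epsilon>"
    and S_plus: "cplus S T = quot_codefect T qt U"
    and E_basis: "rbasis sm E"
    and E_sing: "\<And>i. singular (quot_codefect T qt U) q (E i)"
begin

abbreviation "K \<equiv> Ksub \<sigma> \<epsilon>"
abbreviation "R \<equiv> quot_codefect T qt U"

lemma aa: "anti_aut \<sigma>" using adm_aa[OF adm] .
lemma T_st: "stable_subgroup \<sigma> \<epsilon> T" using T_sub unfolding Kcirc_subspace_def by blast
lemma S_st: "stable_subgroup \<sigma> \<epsilon> S" using S_sub unfolding Kcirc_subspace_def by blast
lemma sgT: "sg T" using stable_sg[OF T_st] .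
lemma sgS: "sg S" using stable_sg[OF S_st] .
lemma sgK: "sg K" using Ksub_sg[OF adm] .
lemma KT: "K \<subseteq> T" using stable_Ksub[OF T_st] .

lemma qt_rep: "\<exists>t. qt w = coset T t" using qt_form unfolding gen_qf_def by blast
lemma qt_add: "qt x = coset T t \<Longrightarrow> qt y = coset T s \<Longrightarrow> qt (x + y) = coset T (t + s + ft x y)"
  using qt_form unfolding gen_qf_def by blast
lemma qt_sm: "qt w = coset T t \<Longrightarrow> qt (smt w l) = coset T (\<sigma> l * t * l)"
  using qt_form unfolding gen_qf_def by blast
lemma tvs: "trace_valued_sesq \<sigma> \<epsilon> smt ft" using qt_form unfolding gen_qf_def by blast
lemma ft_add1: "ft (x + y) z = ft x z + ft y z" using tvs unfolding trace_valued_sesq_def by blast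
lemma ft_smsm: "ft (smt x a) (smt y b) = \<sigma> a * ft x y * b" using tvs unfolding trace_valued_sesq_def by blast
lemma ft_sym: "ft y x = \<sigma> (ft x y) * \<epsilon>" using tvs unfolding trace_valued_sesq_def by blast
lemma ft_zero1: "ft 0 y = 0" using ft_add1[of 0 0 y] by simp
lemma ft_sum1: "ft (\<Sum>i\<in>A. g i) y = (\<Sum>i\<in>A. ft (g i) y)"
  by (induction A rule: infinite_finite_induct) (simp_all add: ft_zero1 ft_add1)

lemma U_ft1: "u \<in> U \<Longrightarrow> ft u y = 0" using U_rad unfolding Rad_sesq_def by blast
lemma U_ft2: "u \<in> U \<Longrightarrow> ft y u = 0" using U_ft1[of u y] ft_sym[of y u] aa_zero[OF aa] by simp

lemma U_add: "u \<in> U \<Longrightarrow> u' \<in> U \<Longrightarrow> u + u' \<in> U" using U_sub unfolding rsubspace_def by blast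
lemma U_sm: "u \<in> U \<Longrightarrow> smt u l \<in> U" using U_sub unfolding rsubspace_def by blast
lemma \<pi>U: "\<pi> x = 0 \<longleftrightarrow> x \<in> U" using \<pi>_ker by blast

lemma cT0: "coset T 0 = T" using coset_is_H[OF sgT] sg_0[OF sgT] by simp

lemma qt_zero: "qt 0 = T"
proof -
  obtain t where "qt 0 = coset T t" using qt_rep by blast
  hence "qt (smt 0 0) = coset T 0" using qt_sm by fastforce
  thus ?thesis using rvs_zero_vec[OF vs_t] coset_is_H[OF sgT] sg_0[OF sgT] by simp
qed

lemma R_mem: "x \<in> R \<longleftrightarrow> (\<exists>a b. x = a + b \<and> a \<in> S \<and> b \<in> T)"
  using S_plus unfolding cplus_def by blast

lemma coset_mem_eq: "sg H \<Longrightarrow> x \<in> coset H a \<Longrightarrow> coset H x = coset H a"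
  using mem_coset coset_eq_iff by blast

lemma lift_ex: "\<exists>w. \<pi> w = E i \<and> qt w = T"
proof -
  obtain w0 where w0: "\<pi> w0 = E i" using \<pi>_surj by (metis surjD)
  obtain t where t: "qt w0 = coset T t" using qt_rep by blast
  have "q (E i) = coset R t" using qdef[OF t] w0 by simp
  hence eR: "coset R t = R" using E_sing[of i] unfolding singular_def by simp
  have "0 \<in> R" using R_mem sg_0[OF sgS] sg_0[OF sgT] by force
  hence "t \<in> coset R t" unfolding coset_def by force
  hence "t \<in> R" using eR by simp
  then obtain a b where "t = a + b" "a \<in> S" "b \<in> T" using R_mem by blast
  hence "- t = (- a) + (- b)" "- a \<in> S" "- b \<in> T" using sg_neg[OF sgS] sg_neg[OF sgT] by auto
  hence "- t \<in> R" using R_mem by blast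
  then obtain u where u: "u \<in> U" "- t \<in> qt u" unfolding quot_codefect_def by blast
  obtain tu where tu: "qt u = coset T tu" using qt_rep by blast
  have "qt u = coset T (- t)" using coset_mem_eq[OF sgT, of "- t" tu] u tu by simp
  hence "qt (w0 + u) = coset T (t + - t + ft w0 u)" using qt_add[OF t] by blast
  hence "qt (w0 + u) = T" using U_ft2[OF u(1)] coset_is_H[OF sgT] sg_0[OF sgT] by simp
  moreover have "\<pi> (w0 + u) = E i" using rlin_add[OF \<pi>_lin] w0 \<pi>U u(1) by simp
  ultimately show ?thesis by blast
qed

definition et :: "'i \<Rightarrow> 'v" where "et i = (SOME w. \<pi> w = E i \<and> qt w = T)"
lemma et_\<pi>: "\<pi> (et i) = E i" and et_qt: "qt (et i) = T"
  using someI_ex[OF lift_ex[of i]] unfolding et_def by auto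

abbreviation "cf \<equiv> coord sm E"

definition L :: "'w \<Rightarrow> 'v" where
  "L x = (\<Sum>i\<in>{i. cf x i \<noteq> 0}. smt (et i) (cf x i))"

lemma cf_fin: "finite {i. cf x i \<noteq> 0}" using coord_fin[OF vs E_basis] .

lemma L_sup: "finite F \<Longrightarrow> {i. cf x i \<noteq> 0} \<subseteq> F \<Longrightarrow> (\<Sum>i\<in>F. smt (et i) (cf x i)) = L x"
  unfolding L_def by (rule sum_supp_superset_sm[OF vs_t])

lemma L_add: "L (x + y) = L x + L y"
proof -
  let ?F = "{i. cf x i \<noteq> 0} \<union> {i. cf y i \<noteq> 0}"
  have fF: "finite ?F" using cf_fin by simp
  have ca: "cf (x + y) = (\<lambda>i. cf x i + cf y i)" using coord_add[OF vs E_basis] .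
  have "L (x + y) = (\<Sum>i\<in>?F. smt (et i) (cf (x + y) i))"
    by (rule L_sup[symmetric, OF fF]) (auto simp: ca)
  also have "\<dots> = (\<Sum>i\<in>?F. smt (et i) (cf x i)) + (\<Sum>i\<in>?F. smt (et i) (cf y i))"
    by (simp add: ca rvs_add_sc[OF vs_t] sum.distrib)
  also have "\<dots> = L x + L y" using L_sup[OF fF] by auto
  finally show ?thesis .
qed

lemma L_sm: "L (sm x l) = smt (L x) l"
proof -
  let ?F = "{i. cf x i \<noteq> 0}"
  have fF: "finite ?F" using cf_fin by simp
  have ca: "cf (sm x l) = (\<lambda>i. cf x i * l)" using coord_sm[OF vs E_basis] .
  have "L (sm x l) = (\<Sum>i\<in>?F. smt (et i) (cf (sm x l) i))"
    by (rule L_sup[symmetric, OF fF]) (auto simp: ca)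
  also have "\<dots> = smt (\<Sum>i\<in>?F. smt (et i) (cf x i)) l"
    by (simp add: ca rvs_mult[OF vs_t] rvs_sum_vec[OF vs_t])
  also have "\<dots> = smt (L x) l" unfolding L_def ..
  finally show ?thesis .
qed

lemma \<pi>L: "\<pi> (L x) = x"
proof -
  have "\<pi> (L x) = (\<Sum>i\<in>{i. cf x i \<noteq> 0}. sm (E i) (cf x i))"
    unfolding L_def rlin_sum[OF \<pi>_lin] rlin_sm[OF \<pi>_lin] et_\<pi> ..
  also have "\<dots> = x" using coord_sum[OF vs E_basis] .
  finally show ?thesis .
qed

lemma qt_sum: "finite F \<Longrightarrow> qt (\<Sum>i\<in>F. smt (et i) (c i))
   = coset T (\<Sum>(i, j)\<in>{(i, j). i < j \<and> i \<in> F \<and> j \<in> F}. \<sigma> (c i) * ft (et i) (et j) * c j)"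
proof (induction F rule: finite_linorder_max_induct)
  case empty
  show ?case by (simp add: qt_zero cT0)
next
  case (insert b A)
  let ?X = "\<Sum>i\<in>A. smt (et i) (c i)" and ?Y = "smt (et b) (c b)"
  let ?P = "\<lambda>B. {(i, j). i < j \<and> i \<in> B \<and> j \<in> B}"
  let ?g = "\<lambda>(i, j). \<sigma> (c i) * ft (et i) (et j) * c j"
  have bA: "b \<notin> A" using insert.hyps(2) by auto
  have sumI: "(\<Sum>i\<in>insert b A. smt (et i) (c i)) = ?X + ?Y"
    using bA insert.hyps(1) by (simp add: add.commute)
  have qY: "qt ?Y = coset T 0"
    using qt_sm[of "et b" 0 "c b"] et_qt[of b] cT0 by simp
  have ftXY: "ft ?X ?Y = (\<Sum>i\<in>A. \<sigma> (c i) * ft (et i) (et b) * c b)"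
    unfolding ft_sum1 ft_smsm ..
  have Pins: "?P (insert b A) = ?P A \<union> (\<lambda>i. (i, b)) ` A"
    using insert.hyps(2) by auto
  have finP: "finite (?P A)"
    by (rule finite_subset[of _ "A \<times> A"]) (use insert.hyps(1) in auto)
  have disj: "?P A \<inter> (\<lambda>i. (i, b)) ` A = {}" using bA by auto
  have "sum ?g (?P (insert b A)) = sum ?g (?P A) + sum ?g ((\<lambda>i. (i, b)) ` A)"
    unfolding Pins by (rule sum.union_disjoint[OF finP _ disj]) (use insert.hyps(1) in simp)
  also have "sum ?g ((\<lambda>i. (i, b)) ` A) = (\<Sum>i\<in>A. \<sigma> (c i) * ft (et i) (et b) * c b)"
    by (subst sum.reindex) (auto simp: inj_on_def)
  finally have gI: "sum ?g (?P (insert b A)) = sum ?g (?P A) + ft ?X ?Y" using ftXY by simp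
  have "qt (?X + ?Y) = coset T (sum ?g (?P A) + 0 + ft ?X ?Y)"
    using qt_add[OF insert.IH qY] .
  thus ?case using sumI gI by simp
qed

lemma qt_L: "qt (L x) = coset T (gE \<sigma> sm E f x x)"
proof -
  let ?a = "cf x"
  let ?F = "{i. ?a i \<noteq> 0}"
  have "qt (L x) = coset T (\<Sum>(i, j)\<in>{(i, j). i < j \<and> i \<in> ?F \<and> j \<in> ?F}. \<sigma> (?a i) * ft (et i) (et j) * ?a j)"
    unfolding L_def by (rule qt_sum[OF cf_fin])
  also have "(\<Sum>(i, j)\<in>{(i, j). i < j \<and> i \<in> ?F \<and> j \<in> ?F}. \<sigma> (?a i) * ft (et i) (et j) * ?a j)
      = gE \<sigma> sm E f x x"
    unfolding gE_def Let_def
    by (rule sum.cong) (auto simp: fdef[of "et _" "et _", unfolded et_\<pi>])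
  finally show ?thesis .
qed


lemma su_ex: "u \<in> U \<Longrightarrow> \<exists>s. s \<in> S \<and> qt u = coset T s"
proof -
  assume u: "u \<in> U"
  obtain t where t: "qt u = coset T t" using qt_rep by blast
  have "t \<in> qt u" using t coset_self[OF sgT] by simp
  hence "t \<in> R" using u unfolding quot_codefect_def by blast
  then obtain a b where ab: "t = a + b" "a \<in> S" "b \<in> T" using R_mem by blast
  have "coset T t = coset T a" using coset_eq_iff[OF sgT] ab by simp
  thus ?thesis using t ab by blast
qed

definition su :: "'v \<Rightarrow> 'k" where "su u = (SOME s. s \<in> S \<and> qt u = coset T s)"

lemma su_S: "u \<in> U \<Longrightarrow> su u \<in> S" and su_qt: "u \<in> U \<Longrightarrow> qt u = coset T (su u)"
  using someI_ex[OF su_ex] unfolding su_def by auto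

lemma ST_K: "x \<in> S \<Longrightarrow> x \<in> T \<Longrightarrow> x \<in> K" using S_cap by blast

lemma su_add: assumes u: "u \<in> U" and u': "u' \<in> U"
  shows "coset K (su (u + u')) = coset K (su u + su u')"
proof -
  have "qt (u + u') = coset T (su u + su u' + ft u u')" using qt_add[OF su_qt[OF u] su_qt[OF u']] .
  hence "coset T (su (u + u')) = coset T (su u + su u')" using su_qt[OF U_add[OF u u']] U_ft1[OF u] by simp
  hence "su (u + u') - (su u + su u') \<in> T" using coset_eq_iff[OF sgT] by blast
  moreover have "su (u + u') - (su u + su u') \<in> S"
    using sg_diff[OF sgS su_S[OF U_add[OF u u']] sg_add[OF sgS su_S[OF u] su_S[OF u']]] .
  ultimately show ?thesis using coset_eq_iff[OF sgK] ST_K by blast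
qed

lemma su_sm: assumes u: "u \<in> U"
  shows "coset K (su (smt u l)) = coset K (\<sigma> l * su u * l)"
proof -
  have "qt (smt u l) = coset T (\<sigma> l * su u * l)" using qt_sm[OF su_qt[OF u]] .
  hence "coset T (su (smt u l)) = coset T (\<sigma> l * su u * l)" using su_qt[OF U_sm[OF u]] by simp
  hence "su (smt u l) - \<sigma> l * su u * l \<in> T" using coset_eq_iff[OF sgT] by blast
  moreover have "su (smt u l) - \<sigma> l * su u * l \<in> S"
    using sg_diff[OF sgS su_S[OF U_sm[OF u]] stable_mult[OF S_st su_S[OF u]]] .
  ultimately show ?thesis using coset_eq_iff[OF sgK] ST_K by blast
qed

definition uof :: "'v \<Rightarrow> 'v" where "uof v = v - L (\<pi> v)"

lemma uof_U: "uof v \<in> U"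
  unfolding \<pi>U[symmetric] uof_def rlin_diff[OF \<pi>_lin] \<pi>L by simp

lemma uof_add: "uof (x + y) = uof x + uof y"
  unfolding uof_def rlin_add[OF \<pi>_lin] L_add by (simp add: algebra_simps)

lemma uof_sm: "uof (smt x l) = smt (uof x) l"
  unfolding uof_def rlin_sm[OF \<pi>_lin] L_sm rvs_diff_vec[OF vs_t] ..

lemma decomp: "v = L (\<pi> v) + uof v" unfolding uof_def by simp

definition \<alpha> :: "'v \<Rightarrow> 'w \<times> 'k set" where "\<alpha> v = (\<pi> v, coset K (su (uof v)))"

lemma \<alpha>_add: "\<alpha> (x + y) = (fst (\<alpha> x) + fst (\<alpha> y), cplus (snd (\<alpha> x)) (snd (\<alpha> y)))"
  unfolding \<alpha>_def by (simp add: rlin_add[OF \<pi>_lin] cplus_coset[OF sgK] uof_add su_add[OF uof_U uof_U])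

lemma \<alpha>_sm: "\<alpha> (smt x l) = (sm (fst (\<alpha> x)) l, circK \<sigma> \<epsilon> (snd (\<alpha> x)) l)"
  unfolding \<alpha>_def by (simp add: rlin_sm[OF \<pi>_lin] circK_coset[OF adm] uof_sm su_sm[OF uof_U])

lemma \<alpha>_cover: "cover \<sigma> sm E f T (\<alpha> v) = qt v"
proof -
  have "cover \<sigma> sm E f T (\<alpha> v) = coset T (gE \<sigma> sm E f (\<pi> v) (\<pi> v) + su (uof v))"
    unfolding cover_def \<alpha>_def fst_conv snd_conv by (rule cover_coset[OF sgT sgK KT])
  also have "\<dots> = qt (L (\<pi> v) + uof v)"
    using qt_add[OF qt_L su_qt[OF uof_U]] U_ft2[OF uof_U] by simp
  also have "\<dots> = qt v" using decomp[of v] by simp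
  finally show ?thesis .
qed

lemma \<alpha>_inj: "inj \<alpha>"
proof (rule injI)
  fix v v' assume eq: "\<alpha> v = \<alpha> v'"
  hence p: "\<pi> v = \<pi> v'" and c: "coset K (su (uof v)) = coset K (su (uof v'))" unfolding \<alpha>_def by auto
  let ?w = "v - v'"
  have wU: "?w \<in> U" unfolding \<pi>U[symmetric] rlin_diff[OF \<pi>_lin] p by simp
  have uv: "uof v = ?w + uof v'" unfolding uof_def p by simp
  have d1: "su (uof v) - su (uof v') \<in> T" using c coset_eq_iff[OF sgK] KT by blast
  have "qt (uof v) = coset T (su ?w + su (uof v') + ft ?w (uof v'))"
    unfolding uv by (rule qt_add[OF su_qt[OF wU] su_qt[OF uof_U]])
  hence "coset T (su (uof v)) = coset T (su ?w + su (uof v'))" using su_qt[OF uof_U] U_ft1[OF wU] by simp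
  hence d2: "su (uof v) - (su ?w + su (uof v')) \<in> T" using coset_eq_iff[OF sgT] by blast
  have "su ?w = (su (uof v) - su (uof v')) - (su (uof v) - (su ?w + su (uof v')))" by (simp add: algebra_simps)
  hence "su ?w \<in> T" using sg_diff[OF sgT d1 d2] by simp
  hence "qt ?w = T" using su_qt[OF wU] coset_is_H[OF sgT] by simp
  hence "?w \<in> Rad_qf T qt ft" using wU U_rad unfolding Rad_qf_def singular_def by blast
  hence "?w = 0" using U_meet wU by blast
  thus "v = v'" by simp
qed

lemma \<alpha>_img: "range \<alpha> = UNIV \<times> (coset K ` S)"
proof
  show "range \<alpha> \<subseteq> UNIV \<times> coset K ` S" unfolding \<alpha>_def using su_S[OF uof_U] by auto
next
  show "UNIV \<times> coset K ` S \<subseteq> range \<alpha>"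
  proof clarify
    fix x s assume s: "s \<in> S"
    have "s \<in> R" using R_mem s sg_0[OF sgT] by force
    then obtain u0 where u0: "u0 \<in> U" "s \<in> qt u0" unfolding quot_codefect_def by blast
    have "s - su u0 \<in> T" using u0 su_qt[OF u0(1)] mem_coset[OF sgT] by blast
    moreover have "s - su u0 \<in> S" using sg_diff[OF sgS s su_S[OF u0(1)]] .
    ultimately have cs: "coset K s = coset K (su u0)" using coset_eq_iff[OF sgK] ST_K by blast
    let ?v = "L x + u0"
    have pv: "\<pi> ?v = x" using rlin_add[OF \<pi>_lin] \<pi>L \<pi>U u0(1) by simp
    have "uof ?v = u0" unfolding uof_def pv by simp
    hence "\<alpha> ?v = (x, coset K s)" unfolding \<alpha>_def pv cs by simp
    thus "(x, coset K s) \<in> range \<alpha>" by (metis rangeI)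
  qed
qed

lemma main: "\<exists>\<alpha> :: 'v \<Rightarrow> 'w \<times> 'k set.
           bij_betw \<alpha> UNIV (UNIV \<times> (coset (Ksub \<sigma> \<epsilon>) ` S))
         \<and> (\<forall>x y. \<alpha> (x + y) = (fst (\<alpha> x) + fst (\<alpha> y), cplus (snd (\<alpha> x)) (snd (\<alpha> y))))
         \<and> (\<forall>x l. \<alpha> (smt x l) = (sm (fst (\<alpha> x)) l, circK \<sigma> \<epsilon> (snd (\<alpha> x)) l))
         \<and> (\<forall>v. cover \<sigma> sm E f T (\<alpha> v) = qt v)"
  using \<alpha>_inj \<alpha>_img \<alpha>_add \<alpha>_sm \<alpha>_cover unfolding bij_betw_def by blast

end


theorem mainTheorem18:
  fixes \<sigma> :: "'k::division_ring \<Rightarrow> 'k" and \<epsilon> :: 'k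
    and smt :: "'v::ab_group_add \<Rightarrow> 'k \<Rightarrow> 'v"
    and T :: "'k set" and qt :: "'v \<Rightarrow> 'k set" and ft :: "'v \<Rightarrow> 'v \<Rightarrow> 'k"
    and U :: "'v set"
    and sm :: "'w::ab_group_add \<Rightarrow> 'k \<Rightarrow> 'w" and \<pi> :: "'v \<Rightarrow> 'w"
    and q :: "'w \<Rightarrow> 'k set" and f :: "'w \<Rightarrow> 'w \<Rightarrow> 'k"
    and S :: "'k set" and E :: "'i::linorder \<Rightarrow> 'w"
  assumes adm: "admissible \<sigma> \<epsilon>"
    and vs_t: "rvs smt"
    and T_sub: "Kcirc_subspace \<sigma> \<epsilon> T"
    and qt_form: "gen_qf \<sigma> \<epsilon> smt T qt ft"
    and qt_nontriv: "nontrivial_qf T qt"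
    and qt_span: "rspan smt {w. singular T qt w} = UNIV"
    and U_sub: "rsubspace smt U"
    and U_rad: "U \<subseteq> Rad_sesq ft"
    and U_meet: "U \<inter> Rad_qf T qt ft = {0}"
    \<comment> \<open>V = Vt/U, realised by a surjective linear map with kernel U\<close>
    and vs: "rvs sm"
    and \<pi>_lin: "rlinear smt sm \<pi>"
    and \<pi>_surj: "surj \<pi>"
    and \<pi>_ker: "{x. \<pi> x = 0} = U"
    \<comment> \<open>the quotient form q = qt_U with values in Kbar/Rbar, Rbar = Tbar_U, and its sesquilinearization f\<close>
    and q_def: "\<And>w t. qt w = coset T t \<Longrightarrow> q (\<pi> w) = coset (quot_codefect T qt U) t"
    and f_def: "\<And>x y. f (\<pi> x) (\<pi> y) = ft x y"
    and q_nontriv: "nontrivial_qf (quot_codefect T qt U) q"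
    \<comment> \<open>Sbar is a complement of Tbar in Rbar\<close>
    and S_sub: "Kcirc_subspace \<sigma> \<epsilon> S"
    and S_cap: "S \<inter> T = Ksub \<sigma> \<epsilon>"
    and S_plus: "cplus S T = quot_codefect T qt U"
    \<comment> \<open>E a basis of V consisting of q-singular vectors\<close>
    and E_basis: "rbasis sm E"
    and E_sing: "\<And>i. singular (quot_codefect T qt U) q (E i)"
  shows "\<exists>\<alpha> :: 'v \<Rightarrow> 'w \<times> 'k set.
           bij_betw \<alpha> UNIV (UNIV \<times> (coset (Ksub \<sigma> \<epsilon>) ` S))
         \<and> (\<forall>x y. \<alpha> (x + y) = (fst (\<alpha> x) + fst (\<alpha> y), cplus (snd (\<alpha> x)) (snd (\<alpha> y))))
         \<and> (\<forall>x l. \<alpha> (smt x l) = (sm (fst (\<alpha> x)) l, circK \<sigma> \<epsilon> (snd (\<alpha> x)) l))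
         \<and> (\<forall>v. cover \<sigma> sm E f T (\<alpha> v) = qt v)"
  proof -
  interpret thm18 \<sigma> \<epsilon> smt T qt ft U sm \<pi> q f S E
    by (unfold_locales; fact)
  show ?thesis by (rule main)
qed

end
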